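(* Let $\Sigma=\{a,b\}$ and let $A,B$ be positive integers. For $i$ in a finite index set $I$, let $Z_i=W_i+M_i\mathbb{N}^\Sigma$ be an $A,B$-frame. Let $v\in\mathbb{N}^\Sigma$. Then there exists $v'\in\mathbb{N}^\Sigma$ such that $\|v'\|=O\big((A+B)^{O(|I|)}\big)$ (with absolute implicit constants) and, for each $i\in I$, $v\in Z_i$ if and only if $v'\in Z_i$.
   Context: $[0..K]=\{0,1,\ldots,K\}$; $[0..B]^\Sigma_\Sigma$ is the set of $\Sigma\times\Sigma$ matrices with entries in $[0..B]$; for a matrix $M$ with columns $M^x$ and $\lambda\in\mathbb{N}^\Sigma$, $M\lambda=\sum_x\lambda_xM^x$, $M\mathbb{N}^\Sigma=\{M\lambda:\lambda\in\mathbb{N}^\Sigma\}$, and $W+X=\{w+x:w\in W,x\in X\}$. An $A,B$-frame is a set of the form $W+M\mathbb{N}^\Sigma$ with $W\subseteq[0..A]^\Sigma$ and $M\in[0..B]^\Sigma_\Sigma$. For $v\in\mathbb{Q}^\Sigma$, $\|v\|=\max_x|v(x)|$. *)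

theory Defs
  imports Main
begin

datatype sigma = a | b

lemma UNIV_sigma: "(UNIV :: sigma set) = {a, b}"
  using sigma.exhaust by blast

instance sigma :: finite
  by standard (simp add: UNIV_sigma)

text \<open>Vectors in \<nat>^\<Sigma> and \<Sigma>\<times>\<Sigma> matrices (M y x = entry in row y, column x).\<close>
type_synonym vec = "sigma \<Rightarrow> nat"
type_synonym mat = "sigma \<Rightarrow> sigma \<Rightarrow> nat"

definition mat_vec :: "mat \<Rightarrow> vec \<Rightarrow> vec" where
  "mat_vec M l = (\<lambda>y. \<Sum>x\<in>UNIV. l x * M y x)"

definition frame_set :: "vec set \<Rightarrow> mat \<Rightarrow> vec set" where
  "frame_set W M = {(\<lambda>y. w y + mat_vec M l y) | w l. w \<in> W}"

definition is_frame :: "nat \<Rightarrow> nat \<Rightarrow> vec set \<Rightarrow> bool" where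
  "is_frame A B Z \<longleftrightarrow> (\<exists>W M. (\<forall>w\<in>W. \<forall>x. w x \<le> A) \<and> (\<forall>x y. M x y \<le> B)
      \<and> Z = frame_set W M)"

definition vnorm :: "vec \<Rightarrow> nat" where
  "vnorm v = max (v a) (v b)"

end

theory Submission
  imports Defs
begin

lemma step_exists:
  fixes va vb B P Tp :: int
  assumes B: "B \<ge> 1" and P: "P \<ge> 1" and Tp: "Tp \<ge> B*P" and va: "va \<ge> 0" and vb: "vb \<ge> 0"
    and big: "max va vb > (2*B+1)*Tp"
  shows "\<exists>ua ub. 0 \<le> ua \<and> ua \<le> B \<and> 0 \<le> ub \<and> ub \<le> B \<and> ua + ub \<ge> 1 \<and> P*ua \<le> va \<and> P*ub \<le> vb \<and>
     (\<forall>\<alpha> \<beta>. \<bar>\<alpha>\<bar> \<le> B \<longrightarrow> \<bar>\<beta>\<bar> \<le> B \<longrightarrow> \<alpha>*ua + \<beta>*ub = 0 \<or> \<bar>\<alpha>*va+\<beta>*vb\<bar> > Tp)"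
proof -
  have "P \<le> B*P" using mult_right_mono[of 1 B P] B P by simp
  hence Tp0: "Tp \<ge> P" using Tp by linarith
  have Tpnn: "Tp \<ge> 0" using Tp0 P by simp
  have R: "(2*B+1)*Tp \<ge> Tp" using mult_right_mono[of 1 "2*B+1" Tp] B Tpnn by simp
  have BTp: "B*Tp \<ge> 0" using B Tpnn by simp
  show ?thesis
  proof (cases "va \<le> Tp")
    case True
    hence vbR: "vb > (2*B+1)*Tp" using big R by linarith
    show ?thesis
    proof (rule exI[of _ 0], rule exI[of _ 1], intro conjI allI impI)
      show "P*1 \<le> vb" using vbR R Tp0 by linarith
    next
      fix \<alpha> \<beta> :: int assume a: "\<bar>\<alpha>\<bar> \<le> B" and b: "\<bar>\<beta>\<bar> \<le> B"
      show "\<alpha>*0 + \<beta>*1 = 0 \<or> \<bar>\<alpha>*va+\<beta>*vb\<bar> > Tp"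
      proof (cases "\<beta> = 0")
        case False
        hence "\<bar>\<beta>\<bar> \<ge> 1" by simp
        hence "\<bar>\<beta>*vb\<bar> \<ge> vb" using vb by (simp add: abs_mult mult_le_cancel_right1)
        moreover have "\<bar>\<alpha>*va\<bar> \<le> B*Tp" using a True va by (simp add: abs_mult mult_mono)
        moreover have "(2*B+1)*Tp = 2*(B*Tp) + Tp" by (simp add: algebra_simps)
        ultimately show ?thesis using vbR BTp by linarith
      qed simp
    qed (use B va vb in auto)
  next
    case vaT: False
    show ?thesis
    proof (cases "vb \<le> Tp")
      case True
      hence vaR: "va > (2*B+1)*Tp" using big R by linarith
      show ?thesis
      proof (rule exI[of _ 1], rule exI[of _ 0], intro conjI allI impI)
        show "P*1 \<le> va" using vaR R Tp0 by linarith
      next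
        fix \<alpha> \<beta> :: int assume a: "\<bar>\<alpha>\<bar> \<le> B" and b: "\<bar>\<beta>\<bar> \<le> B"
        show "\<alpha>*1 + \<beta>*0 = 0 \<or> \<bar>\<alpha>*va+\<beta>*vb\<bar> > Tp"
        proof (cases "\<alpha> = 0")
          case False
          hence "\<bar>\<alpha>\<bar> \<ge> 1" by simp
          hence "\<bar>\<alpha>*va\<bar> \<ge> va" using va by (simp add: abs_mult mult_le_cancel_right1)
          moreover have "\<bar>\<beta>*vb\<bar> \<le> B*Tp" using b True vb by (simp add: abs_mult mult_mono)
          moreover have "(2*B+1)*Tp = 2*(B*Tp) + Tp" by (simp add: algebra_simps)
          ultimately show ?thesis using vaR BTp by linarith
        qed simp
      qed (use B va vb in auto)
    next
      case vbT: False
      show ?thesis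
      proof (cases "\<exists>\<alpha>0 \<beta>0. \<bar>\<alpha>0\<bar> \<le> B \<and> \<bar>\<beta>0\<bar> \<le> B \<and> (\<alpha>0 \<noteq> 0 \<or> \<beta>0 \<noteq> 0) \<and> \<bar>\<alpha>0*va+\<beta>0*vb\<bar> \<le> Tp")
        case False
        show ?thesis
        proof (rule exI[of _ 1], rule exI[of _ 0], intro conjI allI impI)
          show "P*1 \<le> va" using vaT Tp0 by linarith
        next
          fix \<alpha> \<beta> :: int assume a: "\<bar>\<alpha>\<bar> \<le> B" and b: "\<bar>\<beta>\<bar> \<le> B"
          show "\<alpha>*1 + \<beta>*0 = 0 \<or> \<bar>\<alpha>*va+\<beta>*vb\<bar> > Tp"
            using False a b by force
        qed (use B va vb in auto)
      next
        case True
        then obtain \<alpha>0 \<beta>0 where a0: "\<bar>\<alpha>0\<bar> \<le> B" and b0: "\<bar>\<beta>0\<bar> \<le> B" and nz: "\<alpha>0 \<noteq> 0 \<or> \<beta>0 \<noteq> 0"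
          and h: "\<bar>\<alpha>0*va+\<beta>0*vb\<bar> \<le> Tp" by blast
        have opp: "\<alpha>0*\<beta>0 < 0"
        proof (rule ccontr)
          assume "\<not> \<alpha>0*\<beta>0 < 0"
          hence "(\<alpha>0 \<ge> 0 \<and> \<beta>0 \<ge> 0) \<or> (\<alpha>0 \<le> 0 \<and> \<beta>0 \<le> 0)"
            by (smt (verit) mult_neg_pos mult_pos_neg)
          moreover have "\<alpha>0 \<ge> 0 \<Longrightarrow> \<beta>0 \<ge> 0 \<Longrightarrow> \<alpha>0*va+\<beta>0*vb > Tp"
          proof -
            assume "\<alpha>0 \<ge> 0" "\<beta>0 \<ge> 0"
            thus ?thesis using nz vaT vbT va vb
              by (smt (verit, best) mult_le_cancel_right1 mult_nonneg_nonneg)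
          qed
          moreover have "\<alpha>0 \<le> 0 \<Longrightarrow> \<beta>0 \<le> 0 \<Longrightarrow> -(\<alpha>0*va+\<beta>0*vb) > Tp"
          proof -
            assume "\<alpha>0 \<le> 0" "\<beta>0 \<le> 0"
            hence "-\<alpha>0 \<ge> 0" "-\<beta>0 \<ge> 0" by auto
            hence "(-\<alpha>0)*va+(-\<beta>0)*vb > Tp" using nz vaT vbT va vb
              by (smt (verit, best) mult_le_cancel_right1 mult_nonneg_nonneg)
            thus ?thesis by simp
          qed
          ultimately show False using h by linarith
        qed
        define s where "s = sgn \<alpha>0"
        have s: "\<alpha>0 = s*\<bar>\<alpha>0\<bar>" "\<beta>0 = -s*\<bar>\<beta>0\<bar>" "\<bar>s\<bar> = 1"
          using opp unfolding s_def
          by (auto simp: sgn_if zero_less_mult_iff mult_less_0_iff)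
        have hh: "\<bar>\<bar>\<alpha>0\<bar>*va - \<bar>\<beta>0\<bar>*vb\<bar> \<le> Tp"
        proof -
          have "\<alpha>0*va+\<beta>0*vb = s*(\<bar>\<alpha>0\<bar>*va - \<bar>\<beta>0\<bar>*vb)"
            by (subst s(1), subst s(2)) (simp add: algebra_simps)
          hence "\<bar>\<alpha>0*va+\<beta>0*vb\<bar> = \<bar>\<bar>\<alpha>0\<bar>*va - \<bar>\<beta>0\<bar>*vb\<bar>" using s(3) by (simp add: abs_mult)
          thus ?thesis using h by simp
        qed
        show ?thesis
        proof (rule exI[of _ "\<bar>\<beta>0\<bar>"], rule exI[of _ "\<bar>\<alpha>0\<bar>"], intro conjI allI impI)
          show "1 \<le> \<bar>\<beta>0\<bar> + \<bar>\<alpha>0\<bar>" using nz by (cases "\<alpha>0 = 0") auto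
          have "P*\<bar>\<beta>0\<bar> \<le> B*P" using b0 P by (simp add: mult.commute mult_right_mono)
          thus "P*\<bar>\<beta>0\<bar> \<le> va" using vaT Tp by linarith
          have "P*\<bar>\<alpha>0\<bar> \<le> B*P" using a0 P by (simp add: mult.commute mult_right_mono)
          thus "P*\<bar>\<alpha>0\<bar> \<le> vb" using vbT Tp by linarith
        next
          fix \<alpha> \<beta> :: int assume a: "\<bar>\<alpha>\<bar> \<le> B" and b: "\<bar>\<beta>\<bar> \<le> B"
          define d where "d = \<alpha>*\<bar>\<beta>0\<bar> + \<beta>*\<bar>\<alpha>0\<bar>"
          show "\<alpha>*\<bar>\<beta>0\<bar> + \<beta>*\<bar>\<alpha>0\<bar> = 0 \<or> \<bar>\<alpha>*va+\<beta>*vb\<bar> > Tp"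
          proof (rule ccontr)
            assume "\<not> ?thesis"
            hence dn: "d \<noteq> 0" and f: "\<bar>\<alpha>*va+\<beta>*vb\<bar> \<le> Tp" unfolding d_def by auto
            have e1: "d*va = \<bar>\<beta>0\<bar>*(\<alpha>*va+\<beta>*vb) + \<beta>*(\<bar>\<alpha>0\<bar>*va - \<bar>\<beta>0\<bar>*vb)"
              unfolding d_def by (simp add: algebra_simps)
            have e2: "d*vb = \<bar>\<alpha>0\<bar>*(\<alpha>*va+\<beta>*vb) - \<alpha>*(\<bar>\<alpha>0\<bar>*va - \<bar>\<beta>0\<bar>*vb)"
              unfolding d_def by (simp add: algebra_simps)
            have t1: "\<bar>\<bar>\<beta>0\<bar>*(\<alpha>*va+\<beta>*vb)\<bar> \<le> B*Tp" using b0 f by (simp add: abs_mult mult_mono)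
            have t2: "\<bar>\<beta>*(\<bar>\<alpha>0\<bar>*va - \<bar>\<beta>0\<bar>*vb)\<bar> \<le> B*Tp" using b hh by (simp add: abs_mult mult_mono)
            have t3: "\<bar>\<bar>\<alpha>0\<bar>*(\<alpha>*va+\<beta>*vb)\<bar> \<le> B*Tp" using a0 f by (simp add: abs_mult mult_mono)
            have t4: "\<bar>\<alpha>*(\<bar>\<alpha>0\<bar>*va - \<bar>\<beta>0\<bar>*vb)\<bar> \<le> B*Tp" using a hh by (simp add: abs_mult mult_mono)
            have d1: "\<bar>d\<bar> \<ge> 1" using dn by simp
            have "va \<le> \<bar>d*va\<bar>" using d1 va by (simp add: abs_mult mult_le_cancel_right1)
            hence "va \<le> 2*(B*Tp)" using e1 t1 t2 by linarith
            moreover have "vb \<le> \<bar>d*vb\<bar>" using d1 vb by (simp add: abs_mult mult_le_cancel_right1)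
            hence "vb \<le> 2*(B*Tp)" using e2 t3 t4 by linarith
            moreover have "(2*B+1)*Tp = 2*(B*Tp) + Tp" by (simp add: algebra_simps)
            ultimately show False using big Tpnn by linarith
          qed
        qed (use a0 b0 va vb in auto)
      qed
    qed
  qed
qed


definition ev :: "int \<Rightarrow> int \<Rightarrow> vec \<Rightarrow> int" where
  "ev \<alpha> \<beta> v = \<alpha> * int (v a) + \<beta> * int (v b)"

definition clipeq :: "int \<Rightarrow> int \<Rightarrow> int \<Rightarrow> bool" where
  "clipeq T x y \<longleftrightarrow> x = y \<or> (x > T \<and> y > T) \<or> (x < -T \<and> y < -T)"

definition teq :: "int \<Rightarrow> int \<Rightarrow> int \<Rightarrow> vec \<Rightarrow> vec \<Rightarrow> bool" where
  "teq B T P v v' \<longleftrightarrow> (\<forall>\<alpha> \<beta>. \<bar>\<alpha>\<bar> \<le> B \<longrightarrow> \<bar>\<beta>\<bar> \<le> B \<longrightarrow>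
      P dvd (ev \<alpha> \<beta> v - ev \<alpha> \<beta> v') \<and> clipeq T (ev \<alpha> \<beta> v) (ev \<alpha> \<beta> v'))"

lemma teq_refl: "teq B T P v v"
  by (simp add: teq_def clipeq_def)

lemma teq_sym: "teq B T P v v' \<Longrightarrow> teq B T P v' v"
  unfolding teq_def clipeq_def by (metis dvd_diff_commute)

lemma teq_trans:
  assumes T: "0 \<le> T" and h1: "teq B T P u v" and h2: "teq B T P v w"
  shows "teq B T P u w"
  unfolding teq_def
proof (intro allI impI conjI)
  fix \<alpha> \<beta> :: int
  assume a: "\<bar>\<alpha>\<bar> \<le> B" and b: "\<bar>\<beta>\<bar> \<le> B"
  from h1 a b have 1: "P dvd ev \<alpha> \<beta> u - ev \<alpha> \<beta> v" "clipeq T (ev \<alpha> \<beta> u) (ev \<alpha> \<beta> v)"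
    unfolding teq_def by auto
  from h2 a b have 2: "P dvd ev \<alpha> \<beta> v - ev \<alpha> \<beta> w" "clipeq T (ev \<alpha> \<beta> v) (ev \<alpha> \<beta> w)"
    unfolding teq_def by auto
  have "ev \<alpha> \<beta> u - ev \<alpha> \<beta> w = (ev \<alpha> \<beta> u - ev \<alpha> \<beta> v) + (ev \<alpha> \<beta> v - ev \<alpha> \<beta> w)" by simp
  thus "P dvd ev \<alpha> \<beta> u - ev \<alpha> \<beta> w" using 1(1) 2(1) by (metis dvd_add)
  show "clipeq T (ev \<alpha> \<beta> u) (ev \<alpha> \<beta> w)" using 1(2) 2(2) T unfolding clipeq_def by auto
qed

lemma reduce:
  fixes B T P :: int
  assumes B: "B \<ge> 1" and P: "P \<ge> 1" and T: "T \<ge> 0"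
  shows "\<exists>v'. int (vnorm v') \<le> (2*B+1)*(T + 2*B^2*P) \<and> teq B T P v v'"
proof (induction "v a + v b" arbitrary: v rule: less_induct)
  case less
  define Tp where "Tp = T + 2*B^2*P"
  show ?case
  proof (cases "int (vnorm v) \<le> (2*B+1)*Tp")
    case True
    then show ?thesis using teq_refl Tp_def by blast
  next
    case False
    have BP: "B*P \<le> 2*B^2*P" using B P by (simp add: power2_eq_square mult_right_mono)
    have Tp: "Tp \<ge> B*P" using BP T unfolding Tp_def by linarith
    have mx: "max (int (v a)) (int (v b)) > (2*B+1)*Tp" using False by (simp add: vnorm_def)
    obtain ua ub where u: "0 \<le> ua" "ua \<le> B" "0 \<le> ub" "ub \<le> B" "ua + ub \<ge> 1" "P*ua \<le> int (v a)" "P*ub \<le> int (v b)"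
      and good: "\<forall>\<alpha> \<beta>. \<bar>\<alpha>\<bar> \<le> B \<longrightarrow> \<bar>\<beta>\<bar> \<le> B \<longrightarrow> \<alpha>*ua + \<beta>*ub = 0 \<or> \<bar>\<alpha>*int (v a)+\<beta>*int (v b)\<bar> > Tp"
      using step_exists[OF B P Tp _ _ mx] by auto
    define v2 where "v2 = (\<lambda>y. if y = a then nat (int (v a) - P*ua) else nat (int (v b) - P*ub))"
    have v2a: "int (v2 a) = int (v a) - P*ua" using u(6) by (simp add: v2_def)
    have v2b: "int (v2 b) = int (v b) - P*ub" using u(7) by (simp add: v2_def)
    have Pu: "P*ua + P*ub \<ge> 1" using P u(1,3,5)
      by (smt (verit) mult_left_mono mult_le_cancel_left1 distrib_left)
    have less: "v2 a + v2 b < v a + v b" using v2a v2b Pu by linarith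
    have teq1: "teq B T P v v2"
      unfolding teq_def
    proof (intro allI impI conjI)
      fix \<alpha> \<beta> :: int assume a1: "\<bar>\<alpha>\<bar> \<le> B" and b1: "\<bar>\<beta>\<bar> \<le> B"
      have diff: "ev \<alpha> \<beta> v - ev \<alpha> \<beta> v2 = P*(\<alpha>*ua + \<beta>*ub)"
        unfolding ev_def v2a v2b by (simp add: algebra_simps)
      thus "P dvd ev \<alpha> \<beta> v - ev \<alpha> \<beta> v2" by simp
      have fu: "\<bar>\<alpha>*ua + \<beta>*ub\<bar> \<le> 2*B^2"
      proof -
        have "\<bar>\<alpha>*ua\<bar> \<le> B*B" using a1 u(1,2) by (simp add: abs_mult mult_mono)
        moreover have "\<bar>\<beta>*ub\<bar> \<le> B*B" using b1 u(3,4) by (simp add: abs_mult mult_mono)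
        ultimately show ?thesis by (simp add: power2_eq_square abs_triangle_ineq[THEN order_trans])
      qed
      have Pfu: "\<bar>P*(\<alpha>*ua + \<beta>*ub)\<bar> \<le> 2*B^2*P"
        using fu P by (simp add: abs_mult mult.commute mult_left_mono)
      show "clipeq T (ev \<alpha> \<beta> v) (ev \<alpha> \<beta> v2)"
      proof (cases "\<alpha>*ua + \<beta>*ub = 0")
        case True then show ?thesis using diff by (simp add: clipeq_def)
      next
        case False
        hence "\<bar>ev \<alpha> \<beta> v\<bar> > Tp" using good[rule_format, OF a1 b1] by (simp add: ev_def)
        then show ?thesis using diff Pfu unfolding clipeq_def Tp_def by linarith
      qed
    qed
    obtain v' where "int (vnorm v') \<le> (2*B+1)*(T + 2*B^2*P)" "teq B T P v2 v'"
      using less.hyps[OF less] by blast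
    then show ?thesis using teq_trans[OF T teq1] by blast
  qed
qed


lemma clip_sgn: "0 \<le> T \<Longrightarrow> clipeq T x y \<Longrightarrow> sgn x = sgn y"
  unfolding clipeq_def by (auto simp: sgn_if)

definition pm :: "int \<Rightarrow> int \<Rightarrow> int \<Rightarrow> int \<Rightarrow> int" where
  "pm p1 q1 p2 q2 = (if p1*q2 - p2*q1 \<noteq> 0 then \<bar>p1*q2 - p2*q1\<bar>
     else if p1 + q1 \<noteq> 0 then p1 + q1 else if p2 + q2 \<noteq> 0 then p2 + q2 else 1)"

definition Hyp :: "int \<Rightarrow> int \<Rightarrow> int \<Rightarrow> int \<Rightarrow> int \<Rightarrow> int \<Rightarrow> int \<Rightarrow> bool" where
  "Hyp B T0 P xa xb ya yb \<longleftrightarrow> (\<forall>\<alpha> \<beta>. \<bar>\<alpha>\<bar> \<le> B \<longrightarrow> \<bar>\<beta>\<bar> \<le> B \<longrightarrow>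
     P dvd (\<alpha>*xa+\<beta>*xb - (\<alpha>*ya+\<beta>*yb)) \<and> clipeq T0 (\<alpha>*xa+\<beta>*xb) (\<alpha>*ya+\<beta>*yb))"

lemma semigroup:
  fixes n1 n2 s s' T0 :: int and l1 l2 :: nat
  assumes n1: "n1 > 0" and n2: "n2 \<ge> 0" and T0: "T0 \<ge> n1*n2" and s: "s = int l1*n1 + int l2*n2"
    and d: "n1 dvd (s' - s)" and s': "s' > T0"
  shows "\<exists>m1 m2::nat. s' = int m1*n1 + int m2*n2"
proof -
  define r where "r = int l2 mod n1"
  define q where "q = int l2 div n1"
  have r: "0 \<le> r" "r < n1" "int l2 = n1*q + r" using n1 unfolding r_def q_def by auto
  have "s - r*n2 = n1*(int l1 + q*n2)" using s r(3) by (simp add: algebra_simps)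
  hence "n1 dvd (s - r*n2)" by simp
  hence "n1 dvd (s' - r*n2)" using d
    by (metis diff_add_cancel dvd_add add_diff_eq)
  then obtain k where k: "s' - r*n2 = n1*k" by (auto elim: dvdE)
  have "r*n2 \<le> n1*n2" using r n2 by (simp add: mult_right_mono)
  hence "n1*k > 0" using k s' T0 by linarith
  hence "k > 0" using n1 by (simp add: zero_less_mult_iff)
  show ?thesis
    by (rule exI[of _ "nat k"], rule exI[of _ "nat r"]) (use k r \<open>k > 0\<close> in \<open>simp add: algebra_simps\<close>)
qed

lemma cone_det:
  fixes p1 q1 p2 q2 xa xb ya yb B T0 P :: int and l1 l2 :: nat
  assumes rng: "\<bar>p1\<bar> \<le> B" "\<bar>q1\<bar> \<le> B" "\<bar>p2\<bar> \<le> B" "\<bar>q2\<bar> \<le> B"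
    and D: "p1*q2 - p2*q1 \<noteq> 0" and dv: "(p1*q2 - p2*q1) dvd P" and T0: "T0 \<ge> 0"
    and H: "Hyp B T0 P xa xb ya yb"
    and x: "xa = int l1*p1 + int l2*p2" "xb = int l1*q1 + int l2*q2"
  shows "\<exists>m1 m2::nat. ya = int m1*p1 + int m2*p2 \<and> yb = int m1*q1 + int m2*q2"
proof -
  define \<Delta> where "\<Delta> = p1*q2 - p2*q1"
  have f1x: "q2*xa + (-p2)*xb = \<Delta>*int l1" using x unfolding \<Delta>_def by (simp add: algebra_simps)
  have f2x: "(-q1)*xa + p1*xb = \<Delta>*int l2" using x unfolding \<Delta>_def by (simp add: algebra_simps)
  have H1: "P dvd (q2*xa + (-p2)*xb - (q2*ya + (-p2)*yb)) \<and> clipeq T0 (q2*xa + (-p2)*xb) (q2*ya + (-p2)*yb)"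
    using H[unfolded Hyp_def, rule_format, of q2 "-p2"] rng by auto
  have H2: "P dvd ((-q1)*xa + p1*xb - ((-q1)*ya + p1*yb)) \<and> clipeq T0 ((-q1)*xa + p1*xb) ((-q1)*ya + p1*yb)"
    using H[unfolded Hyp_def, rule_format, of "-q1" p1] rng by auto
  have gen: "\<exists>m. fy = \<Delta>*m \<and> m \<ge> 0" if fx: "fx = \<Delta>*int l" and dd: "P dvd (fx - fy)" and c: "clipeq T0 fx fy" for fx fy l
  proof -
    have "\<Delta> dvd (fx - fy)" using dd dv unfolding \<Delta>_def by (rule dvd_trans[rotated])
    moreover have "\<Delta> dvd fx" using fx by simp
    ultimately have "\<Delta> dvd (fx - (fx - fy))" by (simp only: dvd_diff)
    hence "\<Delta> dvd fy" by simp
    then obtain m where m: "fy = \<Delta>*m" by (auto elim: dvdE)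
    have "sgn fx = sgn fy" using clip_sgn[OF T0 c] .
    hence "sgn \<Delta> * sgn (int l) = sgn \<Delta> * sgn m" using fx m by (simp add: sgn_mult)
    hence "sgn (int l) = sgn m" using D unfolding \<Delta>_def by (simp add: sgn_if split: if_splits)
    hence "m \<ge> 0" by (auto simp: sgn_if split: if_splits)
    thus ?thesis using m by blast
  qed
  obtain m1 where m1: "q2*ya + (-p2)*yb = \<Delta>*m1" "m1 \<ge> 0" using gen[OF f1x] H1 by blast
  obtain m2 where m2: "(-q1)*ya + p1*yb = \<Delta>*m2" "m2 \<ge> 0" using gen[OF f2x] H2 by blast
  have "\<Delta>*ya = p1*(q2*ya + (-p2)*yb) + p2*((-q1)*ya + p1*yb)" unfolding \<Delta>_def by (simp add: algebra_simps)
  also have "\<dots> = \<Delta>*(m1*p1 + m2*p2)" using m1 m2 by (simp add: algebra_simps)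
  finally have ya: "ya = m1*p1 + m2*p2" using D unfolding \<Delta>_def by simp
  have "\<Delta>*yb = q1*(q2*ya + (-p2)*yb) + q2*((-q1)*ya + p1*yb)" unfolding \<Delta>_def by (simp add: algebra_simps)
  also have "\<dots> = \<Delta>*(m1*q1 + m2*q2)" using m1 m2 by (simp add: algebra_simps)
  finally have yb: "yb = m1*q1 + m2*q2" using D unfolding \<Delta>_def by simp
  show ?thesis
    by (rule exI[of _ "nat m1"], rule exI[of _ "nat m2"]) (use ya yb m1(2) m2(2) in simp)
qed

lemma cone_deg:
  fixes p1 q1 p2 q2 xa xb ya yb B T0 P :: int and l1 l2 :: nat
  assumes rng: "0 \<le> p1" "p1 \<le> B" "0 \<le> q1" "q1 \<le> B" "0 \<le> p2" "p2 \<le> B" "0 \<le> q2" "q2 \<le> B"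
    and D: "p1*q2 - p2*q1 = 0" and n1: "p1 + q1 > 0" and dv: "(p1 + q1) dvd P" and T0: "T0 \<ge> 4*B^2"
    and H: "Hyp B T0 P xa xb ya yb"
    and x: "xa = int l1*p1 + int l2*p2" "xb = int l1*q1 + int l2*q2"
  shows "\<exists>m1 m2::nat. ya = int m1*p1 + int m2*p2 \<and> yb = int m1*q1 + int m2*q2"
proof -
  have B1: "B \<ge> 1" using rng n1 by linarith
  have T0nn: "T0 \<ge> 0" using T0 by (smt (verit) zero_le_power2)
  have gx: "q1*xa + (-p1)*xb = 0" using x D by (simp add: algebra_simps)
  have Hg: "clipeq T0 (q1*xa + (-p1)*xb) (q1*ya + (-p1)*yb)" using H[unfolded Hyp_def, rule_format, of q1 "-p1"] rng by auto
  have gy: "q1*ya = p1*yb" using Hg gx T0nn unfolding clipeq_def by auto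
  have Hs: "P dvd (1*xa + 1*xb - (1*ya + 1*yb)) \<and> clipeq T0 (1*xa + 1*xb) (1*ya + 1*yb)"
    using H[unfolded Hyp_def, rule_format, of 1 1] B1 by auto
  have sx: "xa + xb = int l1*(p1+q1) + int l2*(p2+q2)" using x by (simp add: algebra_simps)
  have sxnn: "xa + xb \<ge> 0" using sx rng by simp
  have "\<exists>m1 m2::nat. ya + yb = int m1*(p1+q1) + int m2*(p2+q2)"
  proof (cases "xa + xb = ya + yb")
    case True then show ?thesis using sx by metis
  next
    case False
    hence big: "ya + yb > T0" using Hs sxnn T0nn unfolding clipeq_def by auto
    have "(p1+q1)*(p2+q2) \<le> (2*B)*(2*B)" using rng by (intro mult_mono) auto
    hence T0': "T0 \<ge> (p1+q1)*(p2+q2)" using T0 by (simp add: power2_eq_square)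
    have "P dvd (xa + xb - (ya + yb))" using Hs by simp
    hence "P dvd ((ya+yb) - (xa+xb))" by (simp add: dvd_diff_commute)
    with dv have dd: "(p1+q1) dvd ((ya+yb) - (xa+xb))" by (rule dvd_trans)
    show ?thesis using semigroup[OF n1 _ T0' sx dd big] rng by simp
  qed
  then obtain m1 m2 :: nat where s: "ya + yb = int m1*(p1+q1) + int m2*(p2+q2)" by blast
  have e1: "(p1+q1)*ya = p1*(ya+yb)" using gy by (simp add: algebra_simps)
  have "(p1+q1)*ya = (p1+q1)*(int m1*p1 + int m2*p2)"
    unfolding e1 s using D by (simp add: algebra_simps)
  hence ya: "ya = int m1*p1 + int m2*p2" using n1 by simp
  have e2: "(p1+q1)*yb = q1*(ya+yb)" using gy by (simp add: algebra_simps)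
  have "(p1+q1)*yb = (p1+q1)*(int m1*q1 + int m2*q2)"
    unfolding e2 s using D by (simp add: algebra_simps)
  hence yb: "yb = int m1*q1 + int m2*q2" using n1 by simp
  show ?thesis using ya yb by blast
qed


lemma cone:
  fixes p1 q1 p2 q2 xa xb ya yb B T0 P :: int and l1 l2 :: nat
  assumes rng: "0 \<le> p1" "p1 \<le> B" "0 \<le> q1" "q1 \<le> B" "0 \<le> p2" "p2 \<le> B" "0 \<le> q2" "q2 \<le> B"
    and B1: "B \<ge> 1" and T0: "T0 \<ge> 4*B^2" and dv: "pm p1 q1 p2 q2 dvd P"
    and H: "Hyp B T0 P xa xb ya yb"
    and x: "xa = int l1*p1 + int l2*p2" "xb = int l1*q1 + int l2*q2"
  shows "\<exists>m1 m2::nat. ya = int m1*p1 + int m2*p2 \<and> yb = int m1*q1 + int m2*q2"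
proof -
  have T0nn: "T0 \<ge> 0" using T0 by (smt (verit) zero_le_power2)
  show ?thesis
  proof (cases "p1*q2 - p2*q1 \<noteq> 0")
    case True
    hence d1: "(p1*q2 - p2*q1) dvd P" using dv unfolding pm_def by simp
    show ?thesis using cone_det[OF _ _ _ _ True d1 T0nn H x] rng by simp
  next
    case D: False
    show ?thesis
    proof (cases "p1 + q1 \<noteq> 0")
      case True
      hence n1: "p1 + q1 > 0" using rng by linarith
      have d1: "(p1 + q1) dvd P" using dv D True unfolding pm_def by simp
      show ?thesis using cone_deg[OF rng _ n1 d1 T0 H x] D by simp
    next
      case F1: False
      show ?thesis
      proof (cases "p2 + q2 \<noteq> 0")
        case True
        hence n2: "p2 + q2 > 0" using rng by linarith
        have "(p2 + q2) dvd P" using dv D True F1 unfolding pm_def by simp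
        moreover have D': "p2*q1 - p1*q2 = 0" using D by simp
        moreover have x': "xa = int l2*p2 + int l1*p1" "xb = int l2*q2 + int l1*q1" using x by simp_all
        ultimately obtain m1 m2 :: nat where "ya = int m1*p2 + int m2*p1 \<and> yb = int m1*q2 + int m2*q1"
          using cone_deg[OF rng(5-8) rng(1-4) D' n2 _ T0, of P xa xb ya yb l2 l1] H by blast
        thus ?thesis by (metis add.commute)
      next
        case False
        hence z: "p1 = 0" "q1 = 0" "p2 = 0" "q2 = 0" using F1 rng by auto
        have "clipeq T0 (1*xa + 0*xb) (1*ya + 0*yb)" "clipeq T0 (0*xa + 1*xb) (0*ya + 1*yb)"
          using H[unfolded Hyp_def, rule_format, of 1 0] H[unfolded Hyp_def, rule_format, of 0 1] B1 by auto
        hence "ya = 0" "yb = 0" using x z T0nn unfolding clipeq_def by auto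
        thus ?thesis using z by simp
      qed
    qed
  qed
qed

lemma pm_bounds:
  fixes p1 q1 p2 q2 B :: int
  assumes rng: "0 \<le> p1" "p1 \<le> B" "0 \<le> q1" "q1 \<le> B" "0 \<le> p2" "p2 \<le> B" "0 \<le> q2" "q2 \<le> B" and B1: "B \<ge> 1"
  shows "1 \<le> pm p1 q1 p2 q2 \<and> pm p1 q1 p2 q2 \<le> 2*B^2"
proof -
  have a: "p1*q2 \<le> B*B" "p2*q1 \<le> B*B" using rng by (simp_all add: mult_mono)
  have b: "p1*q2 \<ge> 0" "p2*q1 \<ge> 0" using rng by simp_all
  have c: "2*B \<le> 2*B^2" using B1 by (simp add: power2_eq_square)
  have d: "\<bar>p1*q2 - p2*q1\<bar> \<le> B*B" using a b by linarith
  have e: "B*B \<ge> 1" using B1 mult_mono[of 1 B 1 B] by simp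
  show ?thesis unfolding pm_def using a b c d e rng by (auto simp: power2_eq_square)
qed

lemma mat_vec_eq: "mat_vec M l y = l a * M y a + l b * M y b"
  unfolding mat_vec_def UNIV_sigma by simp

lemma frame_mem:
  fixes A B :: nat and P :: int
  assumes W: "\<forall>w\<in>W. \<forall>x. w x \<le> A" and M: "\<forall>x y. M x y \<le> B" and B1: "B \<ge> 1"
    and te: "teq (int B) (4*int B^2 + 2*int A*int B) P v v'"
    and dv: "pm (int (M a a)) (int (M b a)) (int (M a b)) (int (M b b)) dvd P"
    and v: "v \<in> frame_set W M"
  shows "v' \<in> frame_set W M"
proof -
  obtain w l where w: "w \<in> W" and vw: "v = (\<lambda>y. w y + mat_vec M l y)"
    using v unfolding frame_set_def by blast
  define xa where "xa = int (v a) - int (w a)"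
  define xb where "xb = int (v b) - int (w b)"
  define ya where "ya = int (v' a) - int (w a)"
  define yb where "yb = int (v' b) - int (w b)"
  have x: "xa = int (l a)*int (M a a) + int (l b)*int (M a b)" "xb = int (l a)*int (M b a) + int (l b)*int (M b b)"
    unfolding xa_def xb_def vw mat_vec_eq by simp_all
  have H: "Hyp (int B) (4*int B^2) P xa xb ya yb"
    unfolding Hyp_def
  proof (intro allI impI conjI)
    fix \<alpha> \<beta> :: int assume al: "\<bar>\<alpha>\<bar> \<le> int B" and be: "\<bar>\<beta>\<bar> \<le> int B"
    have e1: "\<alpha>*xa + \<beta>*xb = ev \<alpha> \<beta> v - ev \<alpha> \<beta> w" unfolding xa_def xb_def ev_def by (simp add: algebra_simps)
    have e2: "\<alpha>*ya + \<beta>*yb = ev \<alpha> \<beta> v' - ev \<alpha> \<beta> w" unfolding ya_def yb_def ev_def by (simp add: algebra_simps)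
    have t: "P dvd ev \<alpha> \<beta> v - ev \<alpha> \<beta> v'" "clipeq (4*int B^2 + 2*int A*int B) (ev \<alpha> \<beta> v) (ev \<alpha> \<beta> v')"
      using te al be unfolding teq_def by auto
    show "P dvd \<alpha>*xa + \<beta>*xb - (\<alpha>*ya + \<beta>*yb)" unfolding e1 e2 using t(1) by simp
    have wa: "\<bar>\<alpha> * int (w a)\<bar> \<le> int B * int A" using al W w by (simp add: abs_mult mult_mono)
    have wb: "\<bar>\<beta> * int (w b)\<bar> \<le> int B * int A" using be W w by (simp add: abs_mult mult_mono)
    have "\<bar>ev \<alpha> \<beta> w\<bar> \<le> 2*int A*int B" unfolding ev_def using wa wb by (simp add: algebra_simps)
    thus "clipeq (4*int B^2) (\<alpha>*xa + \<beta>*xb) (\<alpha>*ya + \<beta>*yb)" unfolding e1 e2 using t(2)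
      unfolding clipeq_def by linarith
  qed
  obtain m1 m2 :: nat where m: "ya = int m1*int (M a a) + int m2*int (M a b)" "yb = int m1*int (M b a) + int m2*int (M b b)"
    using cone[OF _ _ _ _ _ _ _ _ _ _ dv H x] M B1 by force
  define l' where "l' = (\<lambda>x. if x = a then m1 else m2)"
  have "v' = (\<lambda>y. w y + mat_vec M l' y)"
  proof
    fix y show "v' y = w y + mat_vec M l' y"
    proof (cases y)
      case a
      have "int (v' a) = int (w a + mat_vec M l' a)" using m(1) unfolding ya_def mat_vec_eq l'_def by simp
      thus ?thesis using a by (simp only: of_nat_eq_iff)
    next
      case b
      have "int (v' b) = int (w b + mat_vec M l' b)" using m(2) unfolding yb_def mat_vec_eq l'_def by simp
      thus ?thesis using b by (simp only: of_nat_eq_iff)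
    qed
  qed
  thus ?thesis unfolding frame_set_def using w by blast
qed


lemma final_bound:
  fixes A B :: nat and P :: int and n :: nat
  assumes A: "A > 0" and B: "B > 0" and n: "n \<ge> 1" and P: "P \<le> (2*int B^2)^n" and P1: "P \<ge> 1"
  shows "(2*int B+1)*((4*int B^2 + 2*int A*int B) + 2*int B^2*P) \<le> 24 * (int A + int B)^(6*n)"
proof -
  define K where "K = int A + int B"
  have K1: "K \<ge> 1" "int A \<le> K" "int B \<le> K" "int B \<ge> 1" "int A \<ge> 1" "K \<ge> 2" using A B unfolding K_def by auto
  have BB: "int B^2 \<le> K^2" using K1 by (simp add: power_mono)
  have AB: "int A * int B \<le> K*K" using K1 by (simp add: mult_mono)
  have "2*int B^2 \<le> 2*K^2" using BB by simp
  also have "\<dots> \<le> K*K^2" using K1 by (intro mult_right_mono) auto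
  finally have B3: "2*int B^2 \<le> K^3" by (simp add: power_numeral_reduce)
  have "(2*int B^2)^n \<le> (K^3)^n" using B3 by (intro power_mono) auto
  hence PK: "P \<le> K^(3*n)" using P by (simp add: power_mult)
  have Kn1: "K^(3*n) \<ge> 1" using K1 by simp
  have T: "4*int B^2 + 2*int A*int B \<le> 6*K^2" using BB AB by (simp add: power2_eq_square)
  have "2*int B^2*P \<le> 2*K^2*K^(3*n)"
  proof -
    have "P \<le> K^(3*n)" by (rule PK)
    have "2*int B^2*P \<le> 2*int B^2*K^(3*n)" using PK by (intro mult_left_mono) auto
    also have "\<dots> \<le> 2*K^2*K^(3*n)" using BB Kn1 by (intro mult_right_mono) auto
    finally show ?thesis .
  qed
  moreover have "6*K^2 \<le> 6*K^2*K^(3*n)" using Kn1 K1 by (simp add: mult_le_cancel_left1)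
  ultimately have S: "(4*int B^2 + 2*int A*int B) + 2*int B^2*P \<le> 8*(K^2*K^(3*n))" using T by linarith
  have Bp: "2*int B+1 \<le> 3*K" using K1 by linarith
  have Snn: "0 \<le> (4*int B^2 + 2*int A*int B) + 2*int B^2*P"
    using P1 by (simp add: power2_eq_square)
  have "(2*int B+1)*((4*int B^2 + 2*int A*int B) + 2*int B^2*P) \<le> (3*K)*(8*(K^2*K^(3*n)))"
    using Bp S K1 Snn by (intro mult_mono) auto
  also have "\<dots> = 24*K^(3+3*n)" by (simp add: power_add power_numeral_reduce algebra_simps)
  also have "\<dots> \<le> 24*K^(6*n)" using n K1 by (intro mult_left_mono power_increasing) auto
  finally show ?thesis unfolding K_def .
qed


theorem lemma4:
  shows "\<exists>C D :: nat. \<forall>(A::nat) (B::nat) (I::nat set) (Z::nat \<Rightarrow> vec set) (v::vec).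
     A > 0 \<longrightarrow> B > 0 \<longrightarrow> finite I \<longrightarrow> (\<forall>i\<in>I. is_frame A B (Z i)) \<longrightarrow>
     (\<exists>v'. vnorm v' \<le> C * (A + B) ^ (D * card I) \<and> (\<forall>i\<in>I. v \<in> Z i \<longleftrightarrow> v' \<in> Z i))"
proof (rule exI[of _ 24], rule exI[of _ 6], intro allI impI)
  fix A B :: nat and I :: "nat set" and Z :: "nat \<Rightarrow> vec set" and v :: vec
  assume A: "A > 0" and B: "B > 0" and fin: "finite I" and fr: "\<forall>i\<in>I. is_frame A B (Z i)"
  show "\<exists>v'. vnorm v' \<le> 24 * (A + B) ^ (6 * card I) \<and> (\<forall>i\<in>I. v \<in> Z i \<longleftrightarrow> v' \<in> Z i)"
  proof (cases "I = {}")
    case True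
    show ?thesis by (rule exI[of _ "\<lambda>_. 0"]) (simp add: True vnorm_def)
  next
    case False
    hence n: "card I \<ge> 1" using fin by (simp add: Suc_le_eq card_gt_0_iff)
    have "\<forall>i\<in>I. \<exists>WM. (\<forall>w\<in>fst WM. \<forall>x. w x \<le> A) \<and> (\<forall>x y. snd WM x y \<le> B) \<and> Z i = frame_set (fst WM) (snd WM)"
      using fr unfolding is_frame_def by (metis fst_conv snd_conv)
    note ex = this
    obtain F where F: "\<forall>i\<in>I. (\<forall>w\<in>fst (F i). \<forall>x. w x \<le> A) \<and> (\<forall>x y. snd (F i) x y \<le> B) \<and> Z i = frame_set (fst (F i)) (snd (F i))"
      using bchoice[OF ex] by blast
    define pmi where "pmi i = pm (int (snd (F i) a a)) (int (snd (F i) b a)) (int (snd (F i) a b)) (int (snd (F i) b b))" for i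
    define P where "P = (\<Prod>i\<in>I. pmi i)"
    have B1: "int B \<ge> 1" using B by simp
    have pmb: "1 \<le> pmi i \<and> pmi i \<le> 2*int B^2" if "i \<in> I" for i
    proof -
      have "\<forall>x y. snd (F i) x y \<le> B" using F that by blast
      hence "\<forall>x y. int (snd (F i) x y) \<le> int B" by simp
      thus ?thesis unfolding pmi_def by (intro pm_bounds B1) auto
    qed
    have B2: "2*int B^2 \<ge> 1" using B1 mult_mono[of 1 "int B" 1 "int B"] by (simp add: power2_eq_square)
    have P1: "P \<ge> 1" unfolding P_def using pmb by (intro prod_ge_1) auto
    have PB: "P \<le> (2*int B^2)^card I" unfolding P_def
      using pmb B2 by (intro prod_le_power) (auto dest: pmb[THEN conjunct1] intro: order_trans[OF zero_le_one])
    have T0: "(0::int) \<le> 4*int B^2 + 2*int A*int B" by simp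
    obtain v' where v': "int (vnorm v') \<le> (2*int B+1)*((4*int B^2 + 2*int A*int B) + 2*int B^2*P)"
      and te: "teq (int B) (4*int B^2 + 2*int A*int B) P v v'"
      using reduce[OF B1 P1 T0, of v] by blast
    have "int (vnorm v') \<le> 24 * (int A + int B)^(6*card I)"
      using v' final_bound[OF A B n PB P1] by linarith
    hence bnd: "vnorm v' \<le> 24 * (A + B) ^ (6 * card I)"
    proof -
      have "int (24 * (A + B) ^ (6 * card I)) = 24 * (int A + int B)^(6*card I)" by simp
      thus ?thesis using \<open>int (vnorm v') \<le> 24 * (int A + int B)^(6*card I)\<close> by linarith
    qed
    have mem: "v \<in> Z i \<longleftrightarrow> v' \<in> Z i" if i: "i \<in> I" for i
    proof -
      have Fi: "\<forall>w\<in>fst (F i). \<forall>x. w x \<le> A" "\<forall>x y. snd (F i) x y \<le> B" "Z i = frame_set (fst (F i)) (snd (F i))"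
        using F i by blast+
      have dv: "pmi i dvd P" unfolding P_def using fin i by (rule dvd_prodI)
      have B1': "B \<ge> 1" using B by simp
      show ?thesis
        using frame_mem[OF Fi(1) Fi(2) B1' te dv[unfolded pmi_def]]
          frame_mem[OF Fi(1) Fi(2) B1' teq_sym[OF te] dv[unfolded pmi_def]] Fi(3) by blast
    qed
    show ?thesis using bnd mem by blast
  qed
qed

end
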